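(* Let $E$ be a real Hilbert space, $C\subseteq E$ nonempty closed convex, $\rho=\sup_{x,y\in C}\lVert x-y\rVert\in[0,+\infty]$, $a\in C$, and $\widehat{x}_t^*\in E$ arbitrary predictions. For all $z\in C$: (i) If $\eta_1\geqslant\dots\geqslant\eta_{T+1}>0$ and the learner plays $\widetilde{x}_t=P_C\big(a-\eta_t\sum_{i=1}^{t-1}x_i^*\big)$, $x_t=P_C\big(\widetilde{x}_t-\eta_t\widehat{x}_t^*\big)$, then \[\mathrm{Regret}(z,\dots,z)\leqslant\frac1{2\eta_{T+1}}\lVert z-a\rVert^2+\sum_{t=1}^T\frac1{\eta_t}Q_\rho^\star\big(\eta_t\lVert x_t^*-\widehat{x}_t^*\rVert\big)-\sum_{t=1}^T\frac1{2\eta_t}\lVert x_t-\widetilde{x}_t\rVert^2,\] and also $\mathrm{Regret}(z,\dots,z)\leqslant\frac1{2\eta_{T+1}}\lVert z-a\rVert^2+\sum_{t=1}^T\frac1{\eta_t}\Phi_{\eta_t}(x_t^*,\widehat{x}_t^* )-\sum_{t=1}^T\frac1{2\eta_t}\lVert y_t-\widetilde{x}_t\rVert^2$ with $y_t=P_C(\widetilde{x}_t-\eta_t\widehat{y}_t^* )$. (ii) If $0<\theta_1\leqslant\dots\leqslant\theta_T$ and the learner plays $\widetilde{x}_t=P_C\big(a-\sum_{i=1}^{t-1}\theta_ix_i^*\big)$, $x_t=P_C\big(\widetilde{x}_t-\theta_t\widehat{x}_t^*\big)$, then \[\mathrm{Regret}(z,\dots,z)\leqslant\frac1{2\theta_1}\lVert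 z-a\rVert^2+\sum_{t=1}^T\frac1{\theta_t}Q_\rho^\star\big(\theta_t\lVert x_t^*-\widehat{x}_t^*\rVert\big)-\sum_{t=1}^T\frac1{2\theta_t}\lVert x_t-\widetilde{x}_t\rVert^2,\] and also $\mathrm{Regret}(z,\dots,z)\leqslant\frac1{2\theta_1}\lVert z-a\rVert^2+\sum_{t=1}^T\frac1{\theta_t}\Phi_{\theta_t}(x_t^*,\widehat{x}_t^* )-\sum_{t=1}^T\frac1{2\theta_t}\lVert y_t-\widetilde{x}_t\rVert^2$ with $y_t=P_C(\widetilde{x}_t-\theta_t\widehat{y}_t^* )$.
   Context: $P_C$ is the metric projection onto $C$. Protocol: at rounds $t=1,\dots,T$ the learner plays $x_t\in C$, the adversary reveals a proper $\varphi_t\colon E\to(-\infty,+\infty]$ with $C\subseteq\operatorname{dom}\partial\varphi_t$, and $x_t^*\in\partial\varphi_t(x_t)$ ($E$ identified with its dual). $\mathrm{Regret}(z,\dots,z)=\sum_t\varphi_t(x_t)-\sum_t\varphi_t(z)$. $Q_\rho^\star(\varkappa)=\frac12\varkappa^2-\frac12(\lvert\varkappa\rvert-\rho)_+^2$ (with $Q_\infty^\star(\varkappa)=\frac12\varkappa^2$), $x_+=\max\{x,0\}$. $\widehat{y}_t^*=\lambda\widehat{x}_t^*+(1-\lambda)x_t^*$, $\lambda=\min\{\lVert x_t^*\rVert/\lVert x_t^*-\widehat{x}_t^*\rVert,1\}$ (any $\lambda$ if $x_t^*=\widehat{x}_t^*$). For $\xi>0$: $\Phi_\xi(x^*,\widehat{x}^*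 )=Q_\rho^\star\big(\xi\min\{\lVert x^*-\widehat{x}^*\rVert,\lVert x^*\rVert\}\big)+\xi\lVert x^*\rVert\min\{\xi(\lVert x^*-\widehat{x}^*\rVert-\lVert x^*\rVert)_+,\rho\}$. *)

theory Defs
  imports "HOL-Analysis.Analysis"
begin

(* Metric projection onto C (well defined for nonempty closed convex C in a Hilbert space). *)
definition metric_proj :: "'a::real_inner set \<Rightarrow> 'a \<Rightarrow> 'a" where
  "metric_proj C x = (SOME p. p \<in> C \<and> (\<forall>y\<in>C. norm (x - p) \<le> norm (x - y)))"

definition proper_fun :: "('a \<Rightarrow> ereal) \<Rightarrow> bool" where
  "proper_fun f \<longleftrightarrow> (\<forall>x. f x \<noteq> -\<infinity>) \<and> (\<exists>x. f x \<noteq> \<infinity>)"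

(* subdifferential (E identified with its dual) *)
definition subdiff :: "('a::real_inner \<Rightarrow> ereal) \<Rightarrow> 'a \<Rightarrow> 'a set" where
  "subdiff f x = {s. \<bar>f x\<bar> \<noteq> \<infinity> \<and> (\<forall>y. f x + ereal (s \<bullet> (y - x)) \<le> f y)}"

definition diam_e :: "'a::metric_space set \<Rightarrow> ereal" where
  "diam_e C = Sup {ereal (dist x y) | x y. x \<in> C \<and> y \<in> C}"

definition pos_part :: "real \<Rightarrow> real" where
  "pos_part x = max x 0"

definition Qstar :: "ereal \<Rightarrow> real \<Rightarrow> real" where
  "Qstar \<rho> k = (if \<rho> = \<infinity> then k\<^sup>2 / 2
                 else k\<^sup>2 / 2 - (pos_part (\<bar>k\<bar> - real_of_ereal \<rho>))\<^sup>2 / 2)"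

definition min_rho :: "real \<Rightarrow> ereal \<Rightarrow> real" where
  "min_rho r \<rho> = (if \<rho> = \<infinity> then r else min r (real_of_ereal \<rho>))"

definition Phi :: "ereal \<Rightarrow> real \<Rightarrow> 'a::real_normed_vector \<Rightarrow> 'a \<Rightarrow> real" where
  "Phi \<rho> \<xi> xs xh =
     Qstar \<rho> (\<xi> * min (norm (xs - xh)) (norm xs))
     + \<xi> * norm xs * min_rho (\<xi> * pos_part (norm (xs - xh) - norm xs)) \<rho>"

(* hat y^* = lambda hat x^* + (1 - lambda) x^*; when x^* = hat x^* the choice of lambda is irrelevant
   (here division by zero gives lambda = 0) *)
definition yhat :: "'a::real_normed_vector \<Rightarrow> 'a \<Rightarrow> 'a" where
  "yhat xs xh = (let l = min (norm xs / norm (xs - xh)) 1 in l *\<^sub>R xh + (1 - l) *\<^sub>R xs)"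

definition regret :: "nat \<Rightarrow> (nat \<Rightarrow> 'a \<Rightarrow> ereal) \<Rightarrow> (nat \<Rightarrow> 'a) \<Rightarrow> 'a \<Rightarrow> real" where
  "regret T \<phi> x z = (\<Sum>t=1..T. real_of_ereal (\<phi> t (x t))) - (\<Sum>t=1..T. real_of_ereal (\<phi> t z))"

end

theory Submission
  imports Defs
begin

lemma parallelogram_mid:
  fixes x u v :: "'a::real_inner"
  shows "(norm (u - v))\<^sup>2 = 2 * (norm (x - u))\<^sup>2 + 2 * (norm (x - v))\<^sup>2
           - 4 * (norm (x - ((1/2) *\<^sub>R u + (1/2) *\<^sub>R v)))\<^sup>2"
  by (simp add: power2_norm_eq_inner inner_diff inner_add inner_commute algebra_simps)

lemma proj_exists:
  fixes C :: "'a::{real_inner,complete_space} set"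
  assumes "closed C" "convex C" "C \<noteq> {}"
  shows "\<exists>p\<in>C. \<forall>y\<in>C. norm (x - p) \<le> norm (x - y)"
proof -
  define d where "d = infdist x C"
  have d0: "0 \<le> d" unfolding d_def by (rule infdist_nonneg)
  define e where "e n = inverse (real (Suc n))" for n
  have e0: "0 < e n" "e n \<le> 1" for n unfolding e_def by (auto simp: field_simps)
  have "\<exists>y\<in>C. dist x y < d + e n" for n
  proof -
    have "(INF a\<in>C. dist x a) < d + e n" using e0[of n] infdist_notempty[OF assms(3)] d_def by simp
    then show ?thesis using assms(3) by (subst (asm) cINF_less_iff) (auto intro: bdd_belowI2[of _ 0])
  qed
  then obtain y where y: "\<And>n. y n \<in> C" "\<And>n. dist x (y n) < d + e n" by metis
  have dle: "d \<le> norm (x - w)" if "w \<in> C" for w using infdist_le[OF that, of x] d_def by (simp add: dist_norm)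
  have sq: "(norm (x - y n))\<^sup>2 \<le> d\<^sup>2 + (2*d+1) * e n" for n
  proof -
    have "norm (x - y n) \<le> d + e n" using y(2)[of n] by (simp add: dist_norm)
    then have "(norm (x - y n))\<^sup>2 \<le> (d + e n)\<^sup>2" by (intro power_mono) auto
    also have "\<dots> = d\<^sup>2 + 2*d*e n + e n * e n" by (simp add: power2_eq_square algebra_simps)
    also have "\<dots> \<le> d\<^sup>2 + 2*d*e n + e n" using e0[of n] by (simp add: mult_left_le)
    finally show ?thesis by (simp add: algebra_simps)
  qed
  have cb: "(norm (y m - y n))\<^sup>2 \<le> 2*(2*d+1)*(e m + e n)" for m n
  proof -
    have "(1/2) *\<^sub>R y m + (1/2) *\<^sub>R y n \<in> C"
      using assms(2) y(1) by (intro convexD) auto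
    then have "d \<le> norm (x - ((1/2) *\<^sub>R y m + (1/2) *\<^sub>R y n))" by (rule dle)
    then have "d\<^sup>2 \<le> (norm (x - ((1/2) *\<^sub>R y m + (1/2) *\<^sub>R y n)))\<^sup>2" using d0 by (intro power_mono) auto
    then show ?thesis using parallelogram_mid[of "y m" "y n" x] sq[of m] sq[of n] by (simp add: algebra_simps)
  qed
  have "Cauchy y"
  proof (rule CauchyI)
    fix r :: real assume r: "0 < r"
    obtain M where M: "4*(2*d+1) / r\<^sup>2 < real (Suc M)" using reals_Archimedean2 by (meson less_Suc_eq order.strict_trans of_nat_less_iff)
    have "norm (y m - y n) < r" if "m \<ge> M" "n \<ge> M" for m n
    proof -
      have em: "e m \<le> e M" "e n \<le> e M" using that unfolding e_def by (auto simp: field_simps)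
      have "4*(2*d+1) < r\<^sup>2 * real (Suc M)" using M r by (simp add: field_simps)
      then have A: "4*(2*d+1) * e M < r\<^sup>2" unfolding e_def by (simp add: field_simps)
      have "(2*(2*d+1))*(e m + e n) \<le> (2*(2*d+1))*(2*e M)" using em d0
        by (intro mult_left_mono) auto
      then have B: "2*(2*d+1)*(e m + e n) \<le> 4*(2*d+1)*e M" by (simp only: mult_ac)
      have "(norm (y m - y n))\<^sup>2 < r\<^sup>2" using order.trans[OF cb[of m n] B] A by (rule le_less_trans)
      then show ?thesis by (rule power_less_imp_less_base[OF _ less_imp_le[OF r]])
    qed
    then show "\<exists>M. \<forall>m\<ge>M. \<forall>n\<ge>M. norm (y m - y n) < r" by blast
  qed
  then obtain p where p: "y \<longlonglongrightarrow> p" using Cauchy_convergent_iff convergent_def by blast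
  have pC: "p \<in> C" using closed_sequentially[OF assms(1)] y(1) p by blast
  have l1: "(\<lambda>n. norm (x - y n)) \<longlonglongrightarrow> norm (x - p)" by (intro tendsto_intros p)
  have l2: "(\<lambda>n. d + e n) \<longlonglongrightarrow> d" unfolding e_def using LIMSEQ_inverse_real_of_nat tendsto_add[of "\<lambda>_. d" d sequentially] by force
  have "norm (x - p) \<le> d"
    using y(2) by (intro LIMSEQ_le[OF l1 l2]) (auto simp: dist_norm less_imp_le)
  then show ?thesis using pC dle by force
qed

lemma mp:
  fixes C :: "'a::{real_inner,complete_space} set"
  assumes "closed C" "convex C" "C \<noteq> {}"
  shows mp_in: "metric_proj C x \<in> C" and mp_min: "\<forall>y\<in>C. norm (x - metric_proj C x) \<le> norm (x - y)"
proof -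
  have "metric_proj C x \<in> C \<and> (\<forall>y\<in>C. norm (x - metric_proj C x) \<le> norm (x - y))"
    unfolding metric_proj_def using proj_exists[OF assms, of x] by (rule someI_ex[where P="\<lambda>p. p \<in> C \<and> (\<forall>y\<in>C. norm (x - p) \<le> norm (x - y))", OF bexE]) blast
  then show "metric_proj C x \<in> C" "\<forall>y\<in>C. norm (x - metric_proj C x) \<le> norm (x - y)" by auto
qed

lemma mp_dot:
  fixes C :: "'a::{real_inner,complete_space} set"
  assumes "closed C" "convex C" "C \<noteq> {}" "y \<in> C"
  shows "(x - metric_proj C x) \<bullet> (y - metric_proj C x) \<le> 0"
  using any_closest_point_dot[OF assms(2,1) mp_in[OF assms(1-3)] assms(4)] mp_min[OF assms(1-3), of x]
  by (simp add: dist_norm)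

lemma mp_nonexp:
  fixes C :: "'a::{real_inner,complete_space} set"
  assumes "closed C" "convex C" "C \<noteq> {}"
  shows "norm (metric_proj C u - metric_proj C v) \<le> norm (u - v)"
proof -
  let ?p = "metric_proj C u" and ?q = "metric_proj C v"
  have 1: "(u - ?p) \<bullet> (?q - ?p) \<le> 0" by (rule mp_dot[OF assms mp_in[OF assms]])
  have 2: "(v - ?q) \<bullet> (?p - ?q) \<le> 0" by (rule mp_dot[OF assms mp_in[OF assms]])
  have "(norm (?p - ?q))\<^sup>2 \<le> (u - v) \<bullet> (?p - ?q)"
    using 1 2 by (simp add: power2_norm_eq_inner inner_diff inner_commute algebra_simps)
  also have "\<dots> \<le> norm (u - v) * norm (?p - ?q)" by (rule Cauchy_Schwarz_ineq2[THEN order_trans[OF abs_ge_self]])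
  finally have "norm (?p - ?q) * norm (?p - ?q) \<le> norm (u - v) * norm (?p - ?q)" by (simp add: power2_eq_square)
  then show ?thesis by (cases "norm (?p - ?q) = 0") auto
qed

lemma Q_aux:
  assumes "0 \<le> k" "0 \<le> dd" "ereal dd \<le> \<rho>"
  shows "k * dd - dd\<^sup>2 / 2 \<le> Qstar \<rho> k"
proof (cases "\<rho> = \<infinity>")
  case True
  have "0 \<le> (k - dd)\<^sup>2" by simp
  then show ?thesis using True by (simp add: Qstar_def power2_eq_square algebra_simps)
next
  case False
  then obtain r where r: "\<rho> = ereal r" using assms(3) by (cases \<rho>) auto
  then have dr: "dd \<le> r" using assms(3) by simp
  show ?thesis
  proof (cases "k \<le> r")
    case True
    then have "pos_part (\<bar>k\<bar> - r) = 0" using assms by (simp add: pos_part_def)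
    moreover have "0 \<le> (k - dd)\<^sup>2" by simp
    ultimately show ?thesis using r by (simp add: Qstar_def power2_eq_square algebra_simps)
  next
    case False
    then have pp: "pos_part (\<bar>k\<bar> - r) = k - r" using assms by (simp add: pos_part_def)
    have "0 \<le> (r - dd) * (k - (r + dd)/2)" using False dr by (intro mult_nonneg_nonneg) auto
    then have X: "dd*k + (r*r - dd*dd)/2 \<le> k*r" by (simp add: algebra_simps)
    have "Qstar \<rho> k = k\<^sup>2/2 - (k - r)\<^sup>2/2" using r pp by (simp add: Qstar_def)
    also have "\<dots> = k*r - r*r/2" by (simp add: power2_eq_square field_simps)
    finally have Y: "Qstar \<rho> k = k*r - r*r/2" .
    have "k * dd - dd\<^sup>2 / 2 = dd*k - dd*dd/2" by (simp add: power2_eq_square algebra_simps)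
    then show ?thesis using X Y by (simp add: field_simps)
  qed
qed

lemma Q_bound:
  assumes "0 < \<eta>" "0 \<le> \<alpha>" "0 \<le> dd" "ereal dd \<le> \<rho>"
  shows "\<alpha> * dd - dd\<^sup>2 / (2 * \<eta>) \<le> Qstar \<rho> (\<eta> * \<alpha>) / \<eta>"
proof -
  have "\<eta> * \<alpha> * dd - dd\<^sup>2 / 2 \<le> Qstar \<rho> (\<eta> * \<alpha>)" using assms by (intro Q_aux) auto
  then have "(\<eta> * \<alpha> * dd - dd\<^sup>2 / 2) / \<eta> \<le> Qstar \<rho> (\<eta> * \<alpha>) / \<eta>" using assms(1) by (intro divide_right_mono) auto
  moreover have "(\<eta> * \<alpha> * dd - dd\<^sup>2 / 2) / \<eta> = \<alpha> * dd - dd\<^sup>2 / (2 * \<eta>)" using assms(1) by (simp add: field_simps)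
  ultimately show ?thesis by simp
qed

lemma diam_le: "x \<in> C \<Longrightarrow> y \<in> C \<Longrightarrow> ereal (dist x y) \<le> diam_e C"
  unfolding diam_e_def by (rule Sup_upper) blast

lemma core_gen:
  fixes C :: "'a::{real_inner,complete_space} set"
  assumes "closed C" "convex C" "C \<noteq> {}" "0 < \<eta>" "w \<in> C"
    and y: "y = metric_proj C (xt - \<eta> *\<^sub>R h)"
  shows "g \<bullet> (y - w) - (norm (w - xt))\<^sup>2 / (2 * \<eta>)
          \<le> Qstar (diam_e C) (\<eta> * norm (g - h)) / \<eta> - (norm (y - xt))\<^sup>2 / (2 * \<eta>)"
proof -
  have yC: "y \<in> C" using y mp_in[OF assms(1-3)] by simp
  have VI: "(xt - \<eta> *\<^sub>R h - y) \<bullet> (w - y) \<le> 0" using y mp_dot[OF assms(1-3,5)] by simp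
  define A where "A = (w - y) \<bullet> (y - xt)"
  define B where "B = h \<bullet> (y - w)"
  have AB: "\<eta> * B \<le> A" using VI unfolding A_def B_def by (simp add: inner_diff inner_commute algebra_simps)
  have id: "(norm (w - xt))\<^sup>2 = (norm (w - y))\<^sup>2 + (norm (y - xt))\<^sup>2 + 2 * A"
    unfolding A_def by (simp add: power2_norm_eq_inner inner_diff inner_commute algebra_simps)
  have gs: "g \<bullet> (y - w) = (g - h) \<bullet> (y - w) + B" unfolding B_def by (simp add: inner_diff_left)
  have cs: "(g - h) \<bullet> (y - w) \<le> norm (g - h) * norm (y - w)"
    by (rule order_trans[OF abs_ge_self Cauchy_Schwarz_ineq2])
  have dd: "ereal (norm (y - w)) \<le> diam_e C" using diam_le[OF yC assms(5)] by (simp add: dist_norm)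
  have Q: "norm (g - h) * norm (y - w) - (norm (y - w))\<^sup>2 / (2 * \<eta>) \<le> Qstar (diam_e C) (\<eta> * norm (g - h)) / \<eta>"
    using assms(4) dd by (intro Q_bound) auto
  have nw: "norm (w - y) = norm (y - w)" by (rule norm_minus_commute)
  have "B - A / \<eta> \<le> 0" using AB assms(4) by (simp add: field_simps)
  moreover have "(norm (w - xt))\<^sup>2 / (2 * \<eta>) = (norm (y - w))\<^sup>2 / (2 * \<eta>) + (norm (y - xt))\<^sup>2 / (2 * \<eta>) + A / \<eta>"
    using id nw assms(4) by (simp add: field_simps)
  ultimately show ?thesis using gs cs Q by linarith
qed

lemma yhat_norms:
  fixes g h :: "'a::real_normed_vector"
  shows "norm (g - yhat g h) = min (norm (g - h)) (norm g)"
    and "norm (h - yhat g h) = pos_part (norm (g - h) - norm g)"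
proof -
  define l where "l = min (norm g / norm (g - h)) 1"
  have yh: "yhat g h = l *\<^sub>R h + (1 - l) *\<^sub>R g" unfolding yhat_def l_def Let_def by simp
  have e1: "g - yhat g h = l *\<^sub>R (g - h)" unfolding yh by (simp add: algebra_simps)
  have e2: "h - yhat g h = (1 - l) *\<^sub>R (h - g)" unfolding yh by (simp add: algebra_simps)
  show "norm (g - yhat g h) = min (norm (g - h)) (norm g)"
   and "norm (h - yhat g h) = pos_part (norm (g - h) - norm g)"
  proof -
    show "norm (g - yhat g h) = min (norm (g - h)) (norm g)"
    proof (cases "g = h")
      case True then show ?thesis unfolding e1 by simp
    next
      case False
      then have n: "0 < norm (g - h)" by simp
      have l0: "0 \<le> l" "l \<le> 1" unfolding l_def using n by auto
      have "norm (g - yhat g h) = l * norm (g - h)" unfolding e1 using l0 by simp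
      also have "\<dots> = min (norm (g - h)) (norm g)" unfolding l_def using n
        by (auto simp: min_def field_simps)
      finally show ?thesis .
    qed
    show "norm (h - yhat g h) = pos_part (norm (g - h) - norm g)"
    proof (cases "g = h")
      case True then show ?thesis unfolding e2 by (simp add: pos_part_def)
    next
      case False
      then have n: "0 < norm (g - h)" by simp
      have l0: "0 \<le> l" "l \<le> 1" unfolding l_def using n by auto
      have "norm (h - yhat g h) = (1 - l) * norm (g - h)" unfolding e2 using l0 by (simp add: norm_minus_commute)
      also have "\<dots> = pos_part (norm (g - h) - norm g)" unfolding l_def pos_part_def using n
        by (auto simp: min_def max_def field_simps)
      finally show ?thesis .
    qed
  qed
qed

lemma core_phi:
  fixes C :: "'a::{real_inner,complete_space} set"
  assumes "closed C" "convex C" "C \<noteq> {}" "0 < \<eta>" "w \<in> C"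
    and x: "x = metric_proj C (xt - \<eta> *\<^sub>R gh)"
  shows "g \<bullet> (x - w) - (norm (w - xt))\<^sup>2 / (2 * \<eta>)
          \<le> Phi (diam_e C) \<eta> g gh / \<eta> - (norm (metric_proj C (xt - \<eta> *\<^sub>R yhat g gh) - xt))\<^sup>2 / (2 * \<eta>)"
proof -
  define y where "y = metric_proj C (xt - \<eta> *\<^sub>R yhat g gh)"
  define m where "m = min_rho (\<eta> * pos_part (norm (g - gh) - norm g)) (diam_e C)"
  have 1: "g \<bullet> (y - w) - (norm (w - xt))\<^sup>2 / (2 * \<eta>)
          \<le> Qstar (diam_e C) (\<eta> * min (norm (g - gh)) (norm g)) / \<eta> - (norm (y - xt))\<^sup>2 / (2 * \<eta>)"
    using core_gen[OF assms(1-5) y_def, of g] yhat_norms(1)[of g gh] by simp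
  have xC: "x \<in> C" and yC: "y \<in> C" using x y_def mp_in[OF assms(1-3)] by auto
  have ne: "norm (x - y) \<le> norm ((xt - \<eta> *\<^sub>R gh) - (xt - \<eta> *\<^sub>R yhat g gh))"
    unfolding x y_def by (rule mp_nonexp[OF assms(1-3)])
  also have "\<dots> = \<eta> * norm (gh - yhat g gh)" using assms(4)
    by (simp add: scaleR_diff_right[symmetric] norm_minus_commute)
  also have "\<dots> = \<eta> * pos_part (norm (g - gh) - norm g)" by (simp add: yhat_norms(2))
  finally have ne1: "norm (x - y) \<le> \<eta> * pos_part (norm (g - gh) - norm g)" .
  have ne2: "ereal (norm (x - y)) \<le> diam_e C" using diam_le[OF xC yC] by (simp add: dist_norm)
  have nm: "norm (x - y) \<le> m"
  proof (cases "diam_e C = \<infinity>")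
    case True then show ?thesis using ne1 unfolding m_def min_rho_def by simp
  next
    case False
    then obtain r where "diam_e C = ereal r" using ne2 by (cases "diam_e C") auto
    then show ?thesis using ne1 ne2 unfolding m_def min_rho_def by simp
  qed
  have "g \<bullet> (x - y) \<le> norm g * norm (x - y)"
    by (rule order_trans[OF abs_ge_self Cauchy_Schwarz_ineq2])
  also have "\<dots> \<le> norm g * m" using nm by (intro mult_left_mono) auto
  finally have 2: "g \<bullet> (x - y) \<le> norm g * m" .
  have ph: "Phi (diam_e C) \<eta> g gh / \<eta> = Qstar (diam_e C) (\<eta> * min (norm (g - gh)) (norm g)) / \<eta> + norm g * m"
    unfolding Phi_def m_def using assms(4) by (simp add: field_simps)
  have "g \<bullet> (x - w) = g \<bullet> (x - y) + g \<bullet> (y - w)" by (simp add: inner_diff_right)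
  then show ?thesis using 1 2 ph unfolding y_def by linarith
qed

lemma eta_pos:
  assumes "\<forall>t\<in>{1..T}. \<eta> (Suc t) \<le> (\<eta>::nat \<Rightarrow> real) t" "0 < \<eta> (T + 1)" "t \<in> {1..T+1}"
  shows "0 < \<eta> t"
proof -
  have "\<forall>k. k \<le> T \<longrightarrow> 0 < \<eta> (T + 1 - k)"
  proof
    fix k show "k \<le> T \<longrightarrow> 0 < \<eta> (T + 1 - k)"
    proof (induction k)
      case 0 then show ?case using assms(2) by simp
    next
      case (Suc k)
      show ?case
      proof
        assume k: "Suc k \<le> T"
        then have "T - k \<in> {1..T}" by auto
        then have "\<eta> (Suc (T - k)) \<le> \<eta> (T - k)" using assms(1) by blast
        moreover have "Suc (T - k) = T + 1 - k" "T + 1 - Suc k = T - k" using k by auto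
        ultimately show "0 < \<eta> (T + 1 - Suc k)" using Suc k by auto
      qed
    qed
  qed
  then show ?thesis using assms(3) by (metis atLeastAtMost_iff diff_diff_cancel le_diff_conv add.commute le_add_diff_inverse2 Suc_eq_plus1 not_less_eq_eq diff_le_self)
qed

lemma ftrl:
  fixes C :: "'a::{real_inner,complete_space} set" and g x u :: "nat \<Rightarrow> 'a"
  assumes C: "closed C" "convex C" "C \<noteq> {}" and "z \<in> C"
    and eta: "\<forall>t\<in>{1..T}. \<eta> (Suc t) \<le> \<eta> t" "0 < \<eta> (T + 1)"
    and u: "\<And>t. u t = metric_proj C (a - \<eta> t *\<^sub>R (\<Sum>i\<in>{1..<t}. g i))"
    and step: "\<And>t. t \<in> {1..T} \<Longrightarrow> g t \<bullet> (x t - u (Suc t)) - (norm (u (Suc t) - u t))\<^sup>2 / (2 * \<eta> t) \<le> \<delta> t"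
  shows "(\<Sum>t=1..T. g t \<bullet> (x t - z)) \<le> (norm (z - a))\<^sup>2 / (2 * \<eta> (T + 1)) + (\<Sum>t=1..T. \<delta> t)"
proof -
  define G where "G t = (\<Sum>i\<in>{1..<t}. g i)" for t
  define F where "F t y = G t \<bullet> y + (norm (y - a))\<^sup>2 / (2 * \<eta> t)" for t y
  have pos: "0 < \<eta> t" if "t \<in> {1..T+1}" for t using eta_pos[OF eta that] .
  have A: "F t (u t) + (norm (y - u t))\<^sup>2 / (2 * \<eta> t) \<le> F t y" if t: "t \<in> {1..T+1}" and y: "y \<in> C" for t y
  proof -
    have et: "0 < \<eta> t" using pos t .
    have VI: "(a - \<eta> t *\<^sub>R G t - u t) \<bullet> (y - u t) \<le> 0" using mp_dot[OF C y] u[of t] unfolding G_def by simp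
    define P where "P = G t \<bullet> (y - u t)"
    define R where "R = (y - u t) \<bullet> (u t - a)"
    have PR: "0 \<le> \<eta> t * P + R" using VI unfolding P_def R_def by (simp add: inner_diff inner_commute algebra_simps)
    have id: "(norm (y - a))\<^sup>2 = (norm (y - u t))\<^sup>2 + (norm (u t - a))\<^sup>2 + 2 * R"
      unfolding R_def by (simp add: power2_norm_eq_inner inner_diff inner_commute algebra_simps)
    have "F t y - F t (u t) - (norm (y - u t))\<^sup>2 / (2 * \<eta> t) = (\<eta> t * P + R) / \<eta> t"
      unfolding F_def P_def using id et by (simp add: field_simps inner_diff_right)
    moreover have "0 \<le> (\<eta> t * P + R) / \<eta> t" using PR et by simp
    ultimately show ?thesis by linarith
  qed
  have B: "F t (u (Suc t)) + g t \<bullet> u (Suc t) \<le> F (Suc t) (u (Suc t))" if t: "t \<in> {1..T}" for t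
  proof -
    have GS: "G (Suc t) = G t + g t" unfolding G_def using t
      by (simp add: atLeastLessThanSuc add.commute)
    have e1: "0 < \<eta> (Suc t)" using pos t by auto
    have e2: "\<eta> (Suc t) \<le> \<eta> t" using eta(1) t by blast
    have "(norm (u (Suc t) - a))\<^sup>2 / (2 * \<eta> t) \<le> (norm (u (Suc t) - a))\<^sup>2 / (2 * \<eta> (Suc t))"
      using e1 e2 by (intro divide_left_mono) auto
    then show ?thesis unfolding F_def GS by (simp add: inner_add_left)
  qed
  have ind: "s \<le> T \<longrightarrow> (\<Sum>t=1..s. g t \<bullet> x t) + F 1 (u 1) - F (Suc s) (u (Suc s)) \<le> (\<Sum>t=1..s. \<delta> t)" for s
  proof (induction s)
    case 0 then show ?case by simp
  next
    case (Suc s)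
    show ?case
    proof
      assume s: "Suc s \<le> T"
      let ?t = "Suc s"
      have t: "?t \<in> {1..T}" "?t \<in> {1..T+1}" "Suc ?t \<in> {1..T+1}" using s by auto
      have uC: "u (Suc ?t) \<in> C" using u mp_in[OF C] by simp
      have a1: "F ?t (u ?t) + (norm (u (Suc ?t) - u ?t))\<^sup>2 / (2 * \<eta> ?t) \<le> F ?t (u (Suc ?t))"
        by (rule A[OF t(2) uC])
      have a2: "F ?t (u (Suc ?t)) + g ?t \<bullet> u (Suc ?t) \<le> F (Suc ?t) (u (Suc ?t))" by (rule B[OF t(1)])
      have a3: "g ?t \<bullet> x ?t - g ?t \<bullet> u (Suc ?t) - (norm (u (Suc ?t) - u ?t))\<^sup>2 / (2 * \<eta> ?t) \<le> \<delta> ?t"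
        using step[OF t(1)] by (simp add: inner_diff_right)
      have ih: "(\<Sum>t=1..s. g t \<bullet> x t) + F 1 (u 1) - F ?t (u ?t) \<le> (\<Sum>t=1..s. \<delta> t)" using Suc s by simp
      show "(\<Sum>t=1..Suc s. g t \<bullet> x t) + F 1 (u 1) - F (Suc ?t) (u (Suc ?t)) \<le> (\<Sum>t=1..Suc s. \<delta> t)"
        using a1 a2 a3 ih by simp
    qed
  qed
  have fin: "(\<Sum>t=1..T. g t \<bullet> x t) + F 1 (u 1) - F (T+1) (u (T+1)) \<le> (\<Sum>t=1..T. \<delta> t)" using ind[of T] by simp
  have F1: "0 \<le> F 1 (u 1)" using pos[of 1] unfolding F_def G_def by simp
  have FT: "F (T+1) (u (T+1)) \<le> F (T+1) z"
  proof -
    have "0 \<le> (norm (z - u (T+1)))\<^sup>2 / (2 * \<eta> (T+1))" using pos[of "T+1"] by simp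
    then show ?thesis using A[of "T+1" z] \<open>z \<in> C\<close> by simp
  qed
  have Gz: "G (T+1) \<bullet> z = (\<Sum>t=1..T. g t \<bullet> z)" unfolding G_def
    by (simp add: inner_sum_left atLeastLessThanSuc_atLeastAtMost)
  have "(\<Sum>t=1..T. g t \<bullet> (x t - z)) = (\<Sum>t=1..T. g t \<bullet> x t) - (\<Sum>t=1..T. g t \<bullet> z)"
    by (simp add: inner_diff_right sum_subtractf)
  then show ?thesis using fin F1 FT Gz unfolding F_def[of "T+1" z] by linarith
qed

lemma abel:
  fixes b c :: "nat \<Rightarrow> real"
  assumes mono: "\<forall>t\<in>{1..<T}. c (Suc t) \<le> c t" and cpos: "\<forall>t\<in>{1..T}. 0 \<le> c t" "0 \<le> c 1"
    and pre: "\<forall>s\<in>{1..T}. (\<Sum>t=1..s. b t) \<le> D" and "0 \<le> D"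
  shows "(\<Sum>t=1..T. c t * b t) \<le> c 1 * D"
proof -
  have cl: "1 \<le> s \<longrightarrow> s \<le> T \<longrightarrow> (\<Sum>t=1..s. c t * b t) \<le> c s * (\<Sum>t=1..s. b t) + (c 1 - c s) * D" for s
  proof (induction s)
    case 0 then show ?case by simp
  next
    case (Suc s)
    show ?case
    proof (intro impI)
      assume s: "Suc s \<le> T"
      show "(\<Sum>t=1..Suc s. c t * b t) \<le> c (Suc s) * (\<Sum>t=1..Suc s. b t) + (c 1 - c (Suc s)) * D"
      proof (cases "s = 0")
        case True then show ?thesis by simp
      next
        case False
        then have s1: "1 \<le> s" "s \<in> {1..<T}" "s \<in> {1..T}" using s by auto
        have ih: "(\<Sum>t=1..s. c t * b t) \<le> c s * (\<Sum>t=1..s. b t) + (c 1 - c s) * D" using Suc s1 s by simp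
        have "0 \<le> (c s - c (Suc s)) * (D - (\<Sum>t=1..s. b t))"
          using mono s1 pre by (intro mult_nonneg_nonneg) auto
        then show ?thesis using ih s1 by (simp add: algebra_simps)
      qed
    qed
  qed
  show ?thesis
  proof (cases "T = 0")
    case True then show ?thesis using cpos assms(5) by simp
  next
    case False
    then have T: "1 \<le> T" "T \<in> {1..T}" by auto
    have "c T * (\<Sum>t=1..T. b t) \<le> c T * D" using pre cpos T by (intro mult_left_mono) auto
    then show ?thesis using cl[of T] T by (simp add: algebra_simps)
  qed
qed

lemma regret_le:
  assumes "\<forall>t\<in>{1..T}. xs t \<in> subdiff (\<phi> t) (x t)" "\<forall>t\<in>{1..T}. subdiff (\<phi> t) z \<noteq> {}"
  shows "regret T \<phi> x z \<le> (\<Sum>t=1..T. xs t \<bullet> (x t - z))"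
proof -
  have "real_of_ereal (\<phi> t (x t)) - real_of_ereal (\<phi> t z) \<le> xs t \<bullet> (x t - z)" if t: "t \<in> {1..T}" for t
  proof -
    have s: "\<bar>\<phi> t (x t)\<bar> \<noteq> \<infinity>" "\<phi> t (x t) + ereal (xs t \<bullet> (z - x t)) \<le> \<phi> t z"
      using assms(1) t unfolding subdiff_def by auto
    obtain s' where "s' \<in> subdiff (\<phi> t) z" using assms(2) t by blast
    then have z: "\<bar>\<phi> t z\<bar> \<noteq> \<infinity>" unfolding subdiff_def by auto
    obtain p where p: "\<phi> t (x t) = ereal p" using s(1) by (cases "\<phi> t (x t)") auto
    obtain q where q: "\<phi> t z = ereal q" using z by (cases "\<phi> t z") auto
    have "p + xs t \<bullet> (z - x t) \<le> q" using s(2) p q by simp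
    then show ?thesis using p q by (simp add: inner_diff_right)
  qed
  then show ?thesis unfolding regret_def sum_subtractf[symmetric] by (intro sum_mono) auto
qed

lemma Phi_scale:
  assumes "0 < \<theta>"
  shows "Phi \<rho> 1 (\<theta> *\<^sub>R g) (\<theta> *\<^sub>R h) = Phi \<rho> \<theta> g h"
proof -
  have 1: "norm (\<theta> *\<^sub>R g - \<theta> *\<^sub>R h) = \<theta> * norm (g - h)" using assms
    by (simp add: scaleR_diff_right[symmetric])
  have 2: "norm (\<theta> *\<^sub>R g) = \<theta> * norm g" using assms by simp
  have 3: "min (\<theta> * a) (\<theta> * b) = \<theta> * min a b" for a b using assms by (simp add: min_def)
  have 4: "pos_part (\<theta> * a - \<theta> * b) = \<theta> * pos_part (a - b)" for a b
    using assms by (simp add: pos_part_def max_def algebra_simps)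
  show ?thesis unfolding Phi_def 1 2 3 4 by (simp add: algebra_simps)
qed

lemma yhat_scale:
  fixes g h :: "'a::real_normed_vector"
  assumes "0 < \<theta>"
  shows "yhat (\<theta> *\<^sub>R g) (\<theta> *\<^sub>R h) = \<theta> *\<^sub>R yhat g h"
proof -
  have 1: "norm (\<theta> *\<^sub>R g - \<theta> *\<^sub>R h) = \<theta> * norm (g - h)" using assms
    by (simp add: scaleR_diff_right[symmetric])
  have 2: "norm (\<theta> *\<^sub>R g) = \<theta> * norm g" using assms by simp
  have 3: "(\<theta> * a) / (\<theta> * b) = a / b" for a b using assms by simp
  show ?thesis unfolding yhat_def Let_def 1 2 3 by (simp add: algebra_simps)
qed

lemma part_i:
  fixes C :: "'a::{real_inner,complete_space} set" and xs x xt :: "nat \<Rightarrow> 'a"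
  assumes C: "closed C" "convex C" "C \<noteq> {}" and z: "z \<in> C"
    and eta: "\<forall>t\<in>{1..T}. \<eta> (Suc t) \<le> \<eta> t" "0 < \<eta> (T + 1)"
    and xt: "\<forall>t\<in>{1..T}. xt t = metric_proj C (a - \<eta> t *\<^sub>R (\<Sum>i\<in>{1..<t}. xs i))"
    and st: "\<forall>t\<in>{1..T}. \<forall>w\<in>C. xs t \<bullet> (x t - w) - (norm (w - xt t))\<^sup>2 / (2 * \<eta> t) \<le> \<delta> t"
  shows "(\<Sum>t=1..T. xs t \<bullet> (x t - z)) \<le> (norm (z - a))\<^sup>2 / (2 * \<eta> (T + 1)) + (\<Sum>t=1..T. \<delta> t)"
proof -
  define u where "u t = metric_proj C (a - \<eta> t *\<^sub>R (\<Sum>i\<in>{1..<t}. xs i))" for t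
  show ?thesis
  proof (rule ftrl[OF C z eta, of u a xs x \<delta>])
    show "u t = metric_proj C (a - \<eta> t *\<^sub>R (\<Sum>i\<in>{1..<t}. xs i))" for t by (simp add: u_def)
    fix t assume t: "t \<in> {1..T}"
    have "u (Suc t) \<in> C" unfolding u_def by (rule mp_in[OF C])
    moreover have "u t = xt t" using xt t u_def by simp
    ultimately show "xs t \<bullet> (x t - u (Suc t)) - (norm (u (Suc t) - u t))\<^sup>2 / (2 * \<eta> t) \<le> \<delta> t"
      using st t by simp
  qed
qed

lemma theta_pos:
  assumes "0 < (\<theta>::nat \<Rightarrow> real) 1" "\<forall>t\<in>{1..<T}. \<theta> t \<le> \<theta> (Suc t)"
  shows "t \<in> {1..T} \<longrightarrow> 0 < \<theta> t"
proof (induction t)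
  case 0 then show ?case by simp
next
  case (Suc t)
  show ?case
  proof
    assume st: "Suc t \<in> {1..T}"
    show "0 < \<theta> (Suc t)"
    proof (cases "t = 0")
      case True then show ?thesis using assms(1) by simp
    next
      case False
      then have "t \<in> {1..<T}" "t \<in> {1..T}" using st by auto
      then show ?thesis using Suc assms(2) by fastforce
    qed
  qed
qed

lemma part_ii:
  fixes C :: "'a::{real_inner,complete_space} set" and xs x xt :: "nat \<Rightarrow> 'a"
  assumes C: "closed C" "convex C" "C \<noteq> {}" and z: "z \<in> C"
    and th: "0 < \<theta> 1" "\<forall>t\<in>{1..<T}. \<theta> t \<le> \<theta> (Suc t)"
    and xt: "\<forall>t\<in>{1..T}. xt t = metric_proj C (a - (\<Sum>i\<in>{1..<t}. \<theta> i *\<^sub>R xs i))"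
    and st: "\<forall>t\<in>{1..T}. \<forall>w\<in>C. \<theta> t * (xs t \<bullet> (x t - w)) - (norm (w - xt t))\<^sup>2 / 2 \<le> \<delta> t"
  shows "(\<Sum>t=1..T. xs t \<bullet> (x t - z)) \<le> (norm (z - a))\<^sup>2 / (2 * \<theta> 1) + (\<Sum>t=1..T. \<delta> t / \<theta> t)"
proof -
  have tp: "0 < \<theta> t" if "t \<in> {1..T}" for t using theta_pos[OF th] that by blast
  define b where "b t = \<theta> t * (xs t \<bullet> (x t - z)) - \<delta> t" for t
  define c where "c t = 1 / \<theta> t" for t
  define D where "D = (norm (z - a))\<^sup>2 / 2"
  define u where "u t = metric_proj C (a - (1::real) *\<^sub>R (\<Sum>i\<in>{1..<t}. \<theta> i *\<^sub>R xs i))" for t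
  have pre: "\<forall>s\<in>{1..T}. (\<Sum>t=1..s. b t) \<le> D"
  proof
    fix s assume s: "s \<in> {1..T}"
    have "(\<Sum>t=1..s. (\<theta> t *\<^sub>R xs t) \<bullet> (x t - z)) \<le> (norm (z - a))\<^sup>2 / (2 * 1) + (\<Sum>t=1..s. \<delta> t)"
    proof (rule ftrl[OF C z, of s "\<lambda>_. 1" u a "\<lambda>t. \<theta> t *\<^sub>R xs t" x \<delta>])
      show "\<forall>t\<in>{1..s}. (1::real) \<le> 1" "(0::real) < 1" by auto
      show "u t = metric_proj C (a - 1 *\<^sub>R (\<Sum>i\<in>{1..<t}. \<theta> i *\<^sub>R xs i))" for t by (simp add: u_def)
      fix t assume t: "t \<in> {1..s}"
      then have tT: "t \<in> {1..T}" using s by auto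
      have "u (Suc t) \<in> C" unfolding u_def by (rule mp_in[OF C])
      moreover have "u t = xt t" using xt tT u_def by simp
      ultimately show "(\<theta> t *\<^sub>R xs t) \<bullet> (x t - u (Suc t)) - (norm (u (Suc t) - u t))\<^sup>2 / (2 * 1) \<le> \<delta> t"
        using st tT by simp
    qed
    then show "(\<Sum>t=1..s. b t) \<le> D" unfolding b_def D_def by (simp add: sum_subtractf)
  qed
  have ab: "(\<Sum>t=1..T. c t * b t) \<le> c 1 * D"
  proof (rule abel[OF _ _ _ pre])
    show "\<forall>t\<in>{1..<T}. c (Suc t) \<le> c t"
    proof
      fix t assume t: "t \<in> {1..<T}"
      then have "0 < \<theta> t" using tp by auto
      then show "c (Suc t) \<le> c t" unfolding c_def using th(2) t by (simp add: frac_le)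
    qed
    show "\<forall>t\<in>{1..T}. 0 \<le> c t" using tp unfolding c_def by (simp add: less_imp_le)
    show "0 \<le> c 1" using th unfolding c_def by auto
    show "0 \<le> D" unfolding D_def by simp
  qed
  have "(\<Sum>t=1..T. xs t \<bullet> (x t - z)) = (\<Sum>t=1..T. c t * b t + \<delta> t / \<theta> t)"
  proof (rule sum.cong)
    fix t assume "t \<in> {1..T}"
    then have "0 < \<theta> t" using tp by auto
    then show "xs t \<bullet> (x t - z) = c t * b t + \<delta> t / \<theta> t" unfolding c_def b_def by (simp add: field_simps)
  qed simp
  also have "\<dots> = (\<Sum>t=1..T. c t * b t) + (\<Sum>t=1..T. \<delta> t / \<theta> t)" by (rule sum.distrib)
  also have "\<dots> \<le> c 1 * D + (\<Sum>t=1..T. \<delta> t / \<theta> t)" using ab by simp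
  finally show ?thesis unfolding c_def D_def by simp
qed

theorem corollary6:
  fixes C :: "'a::{real_inner,complete_space} set" and a :: 'a and T :: nat
    and \<phi> :: "nat \<Rightarrow> 'a \<Rightarrow> ereal" and xh :: "nat \<Rightarrow> 'a"
  assumes "C \<noteq> {}" and "closed C" and "convex C" and "a \<in> C"
    and "\<And>t. t \<in> {1..T} \<Longrightarrow> proper_fun (\<phi> t)"
    and "\<And>t x. t \<in> {1..T} \<Longrightarrow> x \<in> C \<Longrightarrow> subdiff (\<phi> t) x \<noteq> {}"
  shows
   "(\<forall>(\<eta>::nat \<Rightarrow> real) x xt xs z.
      (\<forall>t\<in>{1..T}. \<eta> (Suc t) \<le> \<eta> t) \<and> 0 < \<eta> (T + 1)
      \<and> (\<forall>t\<in>{1..T}. xt t = metric_proj C (a - \<eta> t *\<^sub>R (\<Sum>i\<in>{1..<t}. xs i))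
                     \<and> x t = metric_proj C (xt t - \<eta> t *\<^sub>R xh t)
                     \<and> xs t \<in> subdiff (\<phi> t) (x t))
      \<and> z \<in> C
      \<longrightarrow>
      regret T \<phi> x z \<le> (norm (z - a))\<^sup>2 / (2 * \<eta> (T + 1))
         + (\<Sum>t=1..T. Qstar (diam_e C) (\<eta> t * norm (xs t - xh t)) / \<eta> t)
         - (\<Sum>t=1..T. (norm (x t - xt t))\<^sup>2 / (2 * \<eta> t))
      \<and>
      regret T \<phi> x z \<le> (norm (z - a))\<^sup>2 / (2 * \<eta> (T + 1))
         + (\<Sum>t=1..T. Phi (diam_e C) (\<eta> t) (xs t) (xh t) / \<eta> t)
         - (\<Sum>t=1..T. (norm (metric_proj C (xt t - \<eta> t *\<^sub>R yhat (xs t) (xh t)) - xt t))\<^sup>2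
                         / (2 * \<eta> t)))
    \<and>
    (\<forall>(\<theta>::nat \<Rightarrow> real) x xt xs z.
      0 < \<theta> 1 \<and> (\<forall>t\<in>{1..<T}. \<theta> t \<le> \<theta> (Suc t))
      \<and> (\<forall>t\<in>{1..T}. xt t = metric_proj C (a - (\<Sum>i\<in>{1..<t}. \<theta> i *\<^sub>R xs i))
                     \<and> x t = metric_proj C (xt t - \<theta> t *\<^sub>R xh t)
                     \<and> xs t \<in> subdiff (\<phi> t) (x t))
      \<and> z \<in> C
      \<longrightarrow>
      regret T \<phi> x z \<le> (norm (z - a))\<^sup>2 / (2 * \<theta> 1)
         + (\<Sum>t=1..T. Qstar (diam_e C) (\<theta> t * norm (xs t - xh t)) / \<theta> t)
         - (\<Sum>t=1..T. (norm (x t - xt t))\<^sup>2 / (2 * \<theta> t))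
      \<and>
      regret T \<phi> x z \<le> (norm (z - a))\<^sup>2 / (2 * \<theta> 1)
         + (\<Sum>t=1..T. Phi (diam_e C) (\<theta> t) (xs t) (xh t) / \<theta> t)
         - (\<Sum>t=1..T. (norm (metric_proj C (xt t - \<theta> t *\<^sub>R yhat (xs t) (xh t)) - xt t))\<^sup>2
                         / (2 * \<theta> t)))"
proof (rule conjI)
  note CC = assms(2,3,1)
  show "\<forall>(\<eta>::nat \<Rightarrow> real) x xt xs z.
      (\<forall>t\<in>{1..T}. \<eta> (Suc t) \<le> \<eta> t) \<and> 0 < \<eta> (T + 1)
      \<and> (\<forall>t\<in>{1..T}. xt t = metric_proj C (a - \<eta> t *\<^sub>R (\<Sum>i\<in>{1..<t}. xs i))
                     \<and> x t = metric_proj C (xt t - \<eta> t *\<^sub>R xh t)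
                     \<and> xs t \<in> subdiff (\<phi> t) (x t))
      \<and> z \<in> C
      \<longrightarrow>
      regret T \<phi> x z \<le> (norm (z - a))\<^sup>2 / (2 * \<eta> (T + 1))
         + (\<Sum>t=1..T. Qstar (diam_e C) (\<eta> t * norm (xs t - xh t)) / \<eta> t)
         - (\<Sum>t=1..T. (norm (x t - xt t))\<^sup>2 / (2 * \<eta> t))
      \<and>
      regret T \<phi> x z \<le> (norm (z - a))\<^sup>2 / (2 * \<eta> (T + 1))
         + (\<Sum>t=1..T. Phi (diam_e C) (\<eta> t) (xs t) (xh t) / \<eta> t)
         - (\<Sum>t=1..T. (norm (metric_proj C (xt t - \<eta> t *\<^sub>R yhat (xs t) (xh t)) - xt t))\<^sup>2
                         / (2 * \<eta> t))"
  proof (intro allI impI)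
    fix \<eta> :: "nat \<Rightarrow> real" and x xt xs z
    assume H: "(\<forall>t\<in>{1..T}. \<eta> (Suc t) \<le> \<eta> t) \<and> 0 < \<eta> (T + 1)
      \<and> (\<forall>t\<in>{1..T}. xt t = metric_proj C (a - \<eta> t *\<^sub>R (\<Sum>i\<in>{1..<t}. xs i))
                     \<and> x t = metric_proj C (xt t - \<eta> t *\<^sub>R xh t)
                     \<and> xs t \<in> subdiff (\<phi> t) (x t))
      \<and> z \<in> C"
    then have eta: "\<forall>t\<in>{1..T}. \<eta> (Suc t) \<le> \<eta> t" "0 < \<eta> (T + 1)"
      and xt: "\<forall>t\<in>{1..T}. xt t = metric_proj C (a - \<eta> t *\<^sub>R (\<Sum>i\<in>{1..<t}. xs i))"
      and x: "\<forall>t\<in>{1..T}. x t = metric_proj C (xt t - \<eta> t *\<^sub>R xh t)"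
      and sd: "\<forall>t\<in>{1..T}. xs t \<in> subdiff (\<phi> t) (x t)"
      and z: "z \<in> C" by auto
    have pos: "0 < \<eta> t" if "t \<in> {1..T}" for t using eta_pos[OF eta] that by auto
    have R: "regret T \<phi> x z \<le> (\<Sum>t=1..T. xs t \<bullet> (x t - z))"
      using regret_le[OF sd] assms(6) z by blast
    have B1: "(\<Sum>t=1..T. xs t \<bullet> (x t - z)) \<le> (norm (z - a))\<^sup>2 / (2 * \<eta> (T + 1))
        + (\<Sum>t=1..T. Qstar (diam_e C) (\<eta> t * norm (xs t - xh t)) / \<eta> t - (norm (x t - xt t))\<^sup>2 / (2 * \<eta> t))"
    proof (rule part_i[OF CC z eta xt])
      show "\<forall>t\<in>{1..T}. \<forall>w\<in>C. xs t \<bullet> (x t - w) - (norm (w - xt t))\<^sup>2 / (2 * \<eta> t)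
         \<le> Qstar (diam_e C) (\<eta> t * norm (xs t - xh t)) / \<eta> t - (norm (x t - xt t))\<^sup>2 / (2 * \<eta> t)"
        using core_gen[OF CC pos] x by blast
    qed
    have B2: "(\<Sum>t=1..T. xs t \<bullet> (x t - z)) \<le> (norm (z - a))\<^sup>2 / (2 * \<eta> (T + 1))
        + (\<Sum>t=1..T. Phi (diam_e C) (\<eta> t) (xs t) (xh t) / \<eta> t
           - (norm (metric_proj C (xt t - \<eta> t *\<^sub>R yhat (xs t) (xh t)) - xt t))\<^sup>2 / (2 * \<eta> t))"
    proof (rule part_i[OF CC z eta xt])
      show "\<forall>t\<in>{1..T}. \<forall>w\<in>C. xs t \<bullet> (x t - w) - (norm (w - xt t))\<^sup>2 / (2 * \<eta> t)
         \<le> Phi (diam_e C) (\<eta> t) (xs t) (xh t) / \<eta> t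
           - (norm (metric_proj C (xt t - \<eta> t *\<^sub>R yhat (xs t) (xh t)) - xt t))\<^sup>2 / (2 * \<eta> t)"
        using core_phi[OF CC pos] x by blast
    qed
    show "regret T \<phi> x z \<le> (norm (z - a))\<^sup>2 / (2 * \<eta> (T + 1))
         + (\<Sum>t=1..T. Qstar (diam_e C) (\<eta> t * norm (xs t - xh t)) / \<eta> t)
         - (\<Sum>t=1..T. (norm (x t - xt t))\<^sup>2 / (2 * \<eta> t))
      \<and>
      regret T \<phi> x z \<le> (norm (z - a))\<^sup>2 / (2 * \<eta> (T + 1))
         + (\<Sum>t=1..T. Phi (diam_e C) (\<eta> t) (xs t) (xh t) / \<eta> t)
         - (\<Sum>t=1..T. (norm (metric_proj C (xt t - \<eta> t *\<^sub>R yhat (xs t) (xh t)) - xt t))\<^sup>2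
                         / (2 * \<eta> t))"
      using R B1 B2 by (simp add: sum_subtractf)
  qed
next
  note CC = assms(2,3,1)
  show "\<forall>(\<theta>::nat \<Rightarrow> real) x xt xs z.
      0 < \<theta> 1 \<and> (\<forall>t\<in>{1..<T}. \<theta> t \<le> \<theta> (Suc t))
      \<and> (\<forall>t\<in>{1..T}. xt t = metric_proj C (a - (\<Sum>i\<in>{1..<t}. \<theta> i *\<^sub>R xs i))
                     \<and> x t = metric_proj C (xt t - \<theta> t *\<^sub>R xh t)
                     \<and> xs t \<in> subdiff (\<phi> t) (x t))
      \<and> z \<in> C
      \<longrightarrow>
      regret T \<phi> x z \<le> (norm (z - a))\<^sup>2 / (2 * \<theta> 1)
         + (\<Sum>t=1..T. Qstar (diam_e C) (\<theta> t * norm (xs t - xh t)) / \<theta> t)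
         - (\<Sum>t=1..T. (norm (x t - xt t))\<^sup>2 / (2 * \<theta> t))
      \<and>
      regret T \<phi> x z \<le> (norm (z - a))\<^sup>2 / (2 * \<theta> 1)
         + (\<Sum>t=1..T. Phi (diam_e C) (\<theta> t) (xs t) (xh t) / \<theta> t)
         - (\<Sum>t=1..T. (norm (metric_proj C (xt t - \<theta> t *\<^sub>R yhat (xs t) (xh t)) - xt t))\<^sup>2
                         / (2 * \<theta> t))"
  proof (intro allI impI)
    fix \<theta> :: "nat \<Rightarrow> real" and x xt xs z
    assume H: "0 < \<theta> 1 \<and> (\<forall>t\<in>{1..<T}. \<theta> t \<le> \<theta> (Suc t))
      \<and> (\<forall>t\<in>{1..T}. xt t = metric_proj C (a - (\<Sum>i\<in>{1..<t}. \<theta> i *\<^sub>R xs i))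
                     \<and> x t = metric_proj C (xt t - \<theta> t *\<^sub>R xh t)
                     \<and> xs t \<in> subdiff (\<phi> t) (x t))
      \<and> z \<in> C"
    then have th: "0 < \<theta> 1" "\<forall>t\<in>{1..<T}. \<theta> t \<le> \<theta> (Suc t)"
      and xt: "\<forall>t\<in>{1..T}. xt t = metric_proj C (a - (\<Sum>i\<in>{1..<t}. \<theta> i *\<^sub>R xs i))"
      and x: "\<forall>t\<in>{1..T}. x t = metric_proj C (xt t - \<theta> t *\<^sub>R xh t)"
      and sd: "\<forall>t\<in>{1..T}. xs t \<in> subdiff (\<phi> t) (x t)"
      and z: "z \<in> C" by auto
    have pos: "0 < \<theta> t" if "t \<in> {1..T}" for t using theta_pos[OF th] that by auto
    have R: "regret T \<phi> x z \<le> (\<Sum>t=1..T. xs t \<bullet> (x t - z))"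
      using regret_le[OF sd] assms(6) z by blast
    have one: "(0::real) < 1" by simp
    have nsc: "norm (\<theta> t *\<^sub>R xs t - \<theta> t *\<^sub>R xh t) = \<theta> t * norm (xs t - xh t)" if "t \<in> {1..T}" for t
      using pos[OF that] by (simp add: scaleR_diff_right[symmetric])
    have B1: "(\<Sum>t=1..T. xs t \<bullet> (x t - z)) \<le> (norm (z - a))\<^sup>2 / (2 * \<theta> 1)
        + (\<Sum>t=1..T. (Qstar (diam_e C) (\<theta> t * norm (xs t - xh t)) - (norm (x t - xt t))\<^sup>2 / 2) / \<theta> t)"
    proof (rule part_ii[OF CC z th xt])
      show "\<forall>t\<in>{1..T}. \<forall>w\<in>C. \<theta> t * (xs t \<bullet> (x t - w)) - (norm (w - xt t))\<^sup>2 / 2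
         \<le> Qstar (diam_e C) (\<theta> t * norm (xs t - xh t)) - (norm (x t - xt t))\<^sup>2 / 2"
      proof (intro ballI)
        fix t w assume t: "t \<in> {1..T}" and w: "w \<in> C"
        have "x t = metric_proj C (xt t - 1 *\<^sub>R (\<theta> t *\<^sub>R xh t))" using x t by simp
        from core_gen[OF CC one w this, of "\<theta> t *\<^sub>R xs t"]
        show "\<theta> t * (xs t \<bullet> (x t - w)) - (norm (w - xt t))\<^sup>2 / 2
         \<le> Qstar (diam_e C) (\<theta> t * norm (xs t - xh t)) - (norm (x t - xt t))\<^sup>2 / 2"
          using nsc[OF t] by simp
      qed
    qed
    have B2: "(\<Sum>t=1..T. xs t \<bullet> (x t - z)) \<le> (norm (z - a))\<^sup>2 / (2 * \<theta> 1)
        + (\<Sum>t=1..T. (Phi (diam_e C) (\<theta> t) (xs t) (xh t)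
           - (norm (metric_proj C (xt t - \<theta> t *\<^sub>R yhat (xs t) (xh t)) - xt t))\<^sup>2 / 2) / \<theta> t)"
    proof (rule part_ii[OF CC z th xt])
      show "\<forall>t\<in>{1..T}. \<forall>w\<in>C. \<theta> t * (xs t \<bullet> (x t - w)) - (norm (w - xt t))\<^sup>2 / 2
         \<le> Phi (diam_e C) (\<theta> t) (xs t) (xh t)
           - (norm (metric_proj C (xt t - \<theta> t *\<^sub>R yhat (xs t) (xh t)) - xt t))\<^sup>2 / 2"
      proof (intro ballI)
        fix t w assume t: "t \<in> {1..T}" and w: "w \<in> C"
        have "x t = metric_proj C (xt t - 1 *\<^sub>R (\<theta> t *\<^sub>R xh t))" using x t by simp
        from core_phi[OF CC one w this, of "\<theta> t *\<^sub>R xs t"]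
        show "\<theta> t * (xs t \<bullet> (x t - w)) - (norm (w - xt t))\<^sup>2 / 2
         \<le> Phi (diam_e C) (\<theta> t) (xs t) (xh t)
           - (norm (metric_proj C (xt t - \<theta> t *\<^sub>R yhat (xs t) (xh t)) - xt t))\<^sup>2 / 2"
          by (simp only: Phi_scale[OF pos[OF t]] yhat_scale[OF pos[OF t]]) simp
      qed
    qed
    have e1: "(\<Sum>t=1..T. (Qstar (diam_e C) (\<theta> t * norm (xs t - xh t)) - (norm (x t - xt t))\<^sup>2 / 2) / \<theta> t)
       = (\<Sum>t=1..T. Qstar (diam_e C) (\<theta> t * norm (xs t - xh t)) / \<theta> t) - (\<Sum>t=1..T. (norm (x t - xt t))\<^sup>2 / (2 * \<theta> t))"
      by (simp add: sum_subtractf[symmetric] diff_divide_distrib)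
    have e2: "(\<Sum>t=1..T. (Phi (diam_e C) (\<theta> t) (xs t) (xh t)
           - (norm (metric_proj C (xt t - \<theta> t *\<^sub>R yhat (xs t) (xh t)) - xt t))\<^sup>2 / 2) / \<theta> t)
       = (\<Sum>t=1..T. Phi (diam_e C) (\<theta> t) (xs t) (xh t) / \<theta> t)
         - (\<Sum>t=1..T. (norm (metric_proj C (xt t - \<theta> t *\<^sub>R yhat (xs t) (xh t)) - xt t))\<^sup>2 / (2 * \<theta> t))"
      by (simp add: sum_subtractf[symmetric] diff_divide_distrib)
    show "regret T \<phi> x z \<le> (norm (z - a))\<^sup>2 / (2 * \<theta> 1)
         + (\<Sum>t=1..T. Qstar (diam_e C) (\<theta> t * norm (xs t - xh t)) / \<theta> t)
         - (\<Sum>t=1..T. (norm (x t - xt t))\<^sup>2 / (2 * \<theta> t))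
      \<and>
      regret T \<phi> x z \<le> (norm (z - a))\<^sup>2 / (2 * \<theta> 1)
         + (\<Sum>t=1..T. Phi (diam_e C) (\<theta> t) (xs t) (xh t) / \<theta> t)
         - (\<Sum>t=1..T. (norm (metric_proj C (xt t - \<theta> t *\<^sub>R yhat (xs t) (xh t)) - xt t))\<^sup>2
                         / (2 * \<theta> t))"
      using R B1 B2 e1 e2 by linarith
  qed
qed

end
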